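(* Let $\textsc{Om}_z$ be the fitness function with unknown target $z\in\{0,1\}^n$ and let $x$ be the current search point. Let $B$ be a set of $b$ known bit positions of which at least $b_0=\beta b$ positions $i$ are non-optimal (i.e., $x_i\neq z_i$), for some $\beta>0$, with the positions of the non-optimal bits distributed uniformly at random in $B$. Let $C,C'$ be sets of bit positions with $|C|=|C'|\le b_0/2$ such that $B,C,C'$ are pairwise disjoint. Then there is a $(1+1)$ elitist black-box strategy that copies the bits of $x$ in $C$ into the positions $C'$ (in a fixed order-preserving correspondence). For any $c>0$ this strategy requires at most $c\cdot|C|\cdot\log(n)/\beta$ iterations with probability $1-n^{-\Omega(c)}$. After the copy operation, at least $b_0-|C|$ bits in $B$ are non-optimal, and their positions are uniformly at random in $B$. The same strategy can be used to overwrite $C'$ with a fixed string (e.g., $(1,\ldots,1)$).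
   Context: For $z\in\{0,1\}^n$, $\textsc{Om}_z(x)=n-\sum_{i=1}^n(x_i\oplus z_i)$. A bit $x_i$ is optimal if $x_i=z_i$, non-optimal otherwise. A $(1+1)$ elitist black-box algorithm stores a single search point $x$; in each iteration it samples an offspring $y$ from a distribution depending only on $x$ (and, for a strategy, on known positions such as $B,C,C'$), learns only whether $f(y)$ is smaller, equal or larger than $f(x)$, and must keep a point of highest fitness among $x,y$ (ties broken arbitrarily). *)

theory Defs
  imports "HOL-Probability.Probability_Mass_Function" "HOL-Combinatorics.Permutations"
begin

text \<open>Search points are functions nat \<Rightarrow> bool; only positions 0..n-1 matter for fitness.\<close>

definition OM :: "nat \<Rightarrow> (nat \<Rightarrow> bool) \<Rightarrow> (nat \<Rightarrow> bool) \<Rightarrow> nat" where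
  "OM n z x = card {i. i < n \<and> x i = z i}"

text \<open>One iteration of a (1+1) elitist black-box algorithm with offspring distribution S
  (depending only on the current point) and (possibly randomised) tie-breaking rule A:
  the algorithm only learns whether f(y) is larger, smaller or equal to f(x).\<close>
definition elitist_step ::
  "nat \<Rightarrow> (nat \<Rightarrow> bool) \<Rightarrow> ((nat \<Rightarrow> bool) \<Rightarrow> (nat \<Rightarrow> bool) pmf)
   \<Rightarrow> ((nat \<Rightarrow> bool) \<Rightarrow> (nat \<Rightarrow> bool) \<Rightarrow> bool pmf) \<Rightarrow> (nat \<Rightarrow> bool) \<Rightarrow> (nat \<Rightarrow> bool) pmf" where
  "elitist_step n z S A x =
     bind_pmf (S x) (\<lambda>y. bind_pmf (A x y) (\<lambda>a.
       return_pmf (if OM n z x < OM n z y then y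
                   else if OM n z y < OM n z x then x
                   else if a then y else x)))"

fun elitist_run ::
  "nat \<Rightarrow> (nat \<Rightarrow> bool) \<Rightarrow> ((nat \<Rightarrow> bool) \<Rightarrow> (nat \<Rightarrow> bool) pmf)
   \<Rightarrow> ((nat \<Rightarrow> bool) \<Rightarrow> (nat \<Rightarrow> bool) \<Rightarrow> bool pmf) \<Rightarrow> nat \<Rightarrow> (nat \<Rightarrow> bool) \<Rightarrow> (nat \<Rightarrow> bool) pmf" where
  "elitist_run n z S A 0 x = return_pmf x"
| "elitist_run n z S A (Suc t) x = bind_pmf (elitist_run n z S A t x) (elitist_step n z S A)"

definition target_of :: "(nat \<Rightarrow> bool) \<Rightarrow> nat set \<Rightarrow> nat set \<Rightarrow> (nat \<Rightarrow> bool) \<Rightarrow> nat \<Rightarrow> bool" where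
  "target_of x B N z0 i = (if i \<in> N then \<not> x i else if i \<in> B then x i else z0 i)"

definition nonopt :: "nat set \<Rightarrow> (nat \<Rightarrow> bool) \<Rightarrow> (nat \<Rightarrow> bool) \<Rightarrow> nat set" where
  "nonopt B z x' = {i \<in> B. x' i \<noteq> z i}"

text \<open>Joint distribution of (target z, search point after t iterations), where the k
  non-optimal positions in B form a uniformly random k-subset of B.\<close>
definition joint ::
  "nat \<Rightarrow> ((nat \<Rightarrow> bool) \<Rightarrow> (nat \<Rightarrow> bool) pmf) \<Rightarrow> ((nat \<Rightarrow> bool) \<Rightarrow> (nat \<Rightarrow> bool) \<Rightarrow> bool pmf)
   \<Rightarrow> nat set \<Rightarrow> nat \<Rightarrow> (nat \<Rightarrow> bool) \<Rightarrow> (nat \<Rightarrow> bool) \<Rightarrow> nat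
   \<Rightarrow> ((nat \<Rightarrow> bool) \<times> (nat \<Rightarrow> bool)) pmf" where
  "joint n S A B k x z0 t =
     bind_pmf (pmf_of_set {N. N \<subseteq> B \<and> card N = k}) (\<lambda>N.
       map_pmf (\<lambda>x'. (target_of x B N z0, x')) (elitist_run n (target_of x B N z0) S A t x))"

text \<open>Goal of the operation: tgt = None means copy x|C into C' via sigma;
  tgt = Some w means overwrite C' with the fixed string w.\<close>
definition goal_reached ::
  "(nat \<Rightarrow> bool) option \<Rightarrow> nat set \<Rightarrow> nat set \<Rightarrow> nat set \<Rightarrow> (nat \<Rightarrow> nat)
   \<Rightarrow> (nat \<Rightarrow> bool) \<Rightarrow> (nat \<Rightarrow> bool) \<Rightarrow> bool" where
  "goal_reached tgt B C C' \<sigma> x x' \<longleftrightarrow>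
     (\<forall>i\<in>C. x' (\<sigma> i) = (case tgt of None \<Rightarrow> x i | Some w \<Rightarrow> w (\<sigma> i))) \<and>
     (\<forall>j. j \<notin> B \<union> C' \<longrightarrow> x' j = x j)"

end

theory Submission
  imports Defs
begin

definition des :: "(nat\<Rightarrow>bool) option \<Rightarrow> (nat\<Rightarrow>nat) \<Rightarrow> (nat\<Rightarrow>bool) \<Rightarrow> nat \<Rightarrow> bool" where
  "des tgt \<sigma> y i = (case tgt of None \<Rightarrow> y i | Some w \<Rightarrow> w (\<sigma> i))"
definition Wr :: "(nat\<Rightarrow>bool) option \<Rightarrow> nat set \<Rightarrow> (nat\<Rightarrow>nat) \<Rightarrow> (nat\<Rightarrow>bool) \<Rightarrow> nat set" where
  "Wr tgt C \<sigma> y = {i\<in>C. y (\<sigma> i) \<noteq> des tgt \<sigma> y i}"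
definition upd :: "(nat\<Rightarrow>nat) \<Rightarrow> (nat\<Rightarrow>bool) \<Rightarrow> nat \<Rightarrow> nat \<Rightarrow> nat \<Rightarrow> bool" where
  "upd \<sigma> y i j = (y(\<sigma> i := \<not> y (\<sigma> i)))(j := \<not> y j)"
definition Sx :: "nat set \<Rightarrow> nat set \<Rightarrow> (nat\<Rightarrow>nat) \<Rightarrow> (nat\<Rightarrow>bool) option \<Rightarrow> (nat\<Rightarrow>bool) \<Rightarrow> (nat\<Rightarrow>bool) pmf" where
  "Sx B C \<sigma> tgt y = (if Wr tgt C \<sigma> y = {} then return_pmf y
      else map_pmf (upd \<sigma> y (Min (Wr tgt C \<sigma> y))) (pmf_of_set B))"
definition Ax :: "(nat\<Rightarrow>bool) \<Rightarrow> (nat\<Rightarrow>bool) \<Rightarrow> bool pmf" where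
  "Ax y v = return_pmf True"

lemma step_eq: "elitist_step n z S Ax y = map_pmf (\<lambda>v. if OM n z y \<le> OM n z v then v else y) (S y)"
  unfolding elitist_step_def Ax_def map_pmf_def
  by (intro bind_pmf_cong refl) (auto simp: bind_return_pmf)

locale cp =
  fixes n :: nat and B C C' :: "nat set" and \<sigma> :: "nat \<Rightarrow> nat" and tgt :: "(nat\<Rightarrow>bool) option"
    and \<beta> :: real and x :: "nat \<Rightarrow> bool" and k :: nat
  assumes Bn: "B \<subseteq> {..<n}" and Cn: "C \<subseteq> {..<n}" and C'n: "C' \<subseteq> {..<n}"
    and BC: "B \<inter> C = {}" and BC': "B \<inter> C' = {}" and CC': "C \<inter> C' = {}"
    and bij: "bij_betw \<sigma> C C'" and bpos: "\<beta> > 0"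
    and Cb: "real (card C) \<le> \<beta> * real (card B) / 2" and kb: "\<beta> * real (card B) \<le> real k" and kB: "k \<le> card B"
begin

abbreviation "S \<equiv> Sx B C \<sigma> tgt"
abbreviation "W \<equiv> Wr tgt C \<sigma>"

definition Inv :: "(nat\<Rightarrow>bool) \<Rightarrow> (nat\<Rightarrow>bool) \<Rightarrow> bool" where
  "Inv z y \<longleftrightarrow> (\<forall>j. j \<notin> B \<union> C' \<longrightarrow> y j = x j) \<and> k + card (W y) \<le> card (nonopt B z y) + card C"

lemma finB: "finite B" using Bn finite_subset by blast
lemma finC: "finite C" using Cn finite_subset by blast

lemma W_sub: "W y \<subseteq> C" by (auto simp: Wr_def)

lemma Bne: "W y \<noteq> {} \<Longrightarrow> B \<noteq> {}"
proof
  assume "W y \<noteq> {}" "B = {}"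
  then have "C \<noteq> {}" using W_sub by blast
  then have "card C \<ge> 1" using finC by (simp add: Suc_le_eq card_gt_0_iff)
  with Cb \<open>B = {}\<close> show False by simp
qed

lemma sigC': "i \<in> C \<Longrightarrow> \<sigma> i \<in> C'" using bij by (auto simp: bij_betw_def)

lemma upd_off: "i \<in> C \<Longrightarrow> j \<in> B \<Longrightarrow> l \<notin> B \<union> C' \<Longrightarrow> upd \<sigma> y i j l = y l"
  using sigC' by (auto simp: upd_def)

lemma des_eq: "(\<forall>j. j \<notin> B \<union> C' \<longrightarrow> y j = x j) \<Longrightarrow> l \<in> C \<Longrightarrow> des tgt \<sigma> y l = des tgt \<sigma> x l"
  using BC CC' by (auto simp: des_def split: option.splits)

lemma W_upd:
  assumes off: "\<forall>j. j \<notin> B \<union> C' \<longrightarrow> y j = x j" and i: "i \<in> W y" and j: "j \<in> B"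
  shows "W (upd \<sigma> y i j) = W y - {i}"
proof -
  have iC: "i \<in> C" using i W_sub by blast
  have off2: "\<forall>l. l \<notin> B \<union> C' \<longrightarrow> upd \<sigma> y i j l = x l" using off upd_off[OF iC j] by simp
  have inj: "inj_on \<sigma> C" using bij by (auto simp: bij_betw_def)
  { fix l assume l: "l \<in> C"
    have "upd \<sigma> y i j (\<sigma> l) = (if l = i then \<not> y (\<sigma> i) else y (\<sigma> l))"
      using sigC'[OF l] BC' j inj l iC by (auto simp: upd_def inj_on_def)
    moreover have "des tgt \<sigma> (upd \<sigma> y i j) l = des tgt \<sigma> y l"
      using des_eq[OF off2 l] des_eq[OF off l] by simp
    ultimately have "(l \<in> W (upd \<sigma> y i j)) = (l \<in> W y - {i})"
      using l i by (auto simp: Wr_def) }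
  then show ?thesis using W_sub by blast
qed


lemma OM_upd:
  assumes iC: "i \<in> C" and j: "j \<in> B" and yz: "y j \<noteq> z j"
  shows "OM n z y \<le> OM n z (upd \<sigma> y i j)"
proof -
  let ?A1 = "{l. l < n \<and> y l = z l}" and ?A2 = "{l. l < n \<and> upd \<sigma> y i j l = z l}"
  have ji: "j \<noteq> \<sigma> i" using sigC'[OF iC] j BC' by blast
  have sub: "?A1 \<subseteq> insert (\<sigma> i) (?A2 - {j})" using yz ji by (auto simp: upd_def)
  have jA2: "j \<in> ?A2" using j Bn yz ji by (auto simp: upd_def)
  have f2: "finite ?A2" by simp
  have "card ?A1 \<le> card (insert (\<sigma> i) (?A2 - {j}))" by (rule card_mono) (use sub in auto)
  also have "\<dots> \<le> Suc (card (?A2 - {j}))" by (rule card_insert_le_m1) simp_all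
  also have "\<dots> = card ?A2" by (rule card_Suc_Diff1[OF f2 jA2])
  finally show ?thesis by (simp add: OM_def)
qed

lemma nonopt_upd:
  assumes iC: "i \<in> C" and j: "j \<in> B"
  shows "card (nonopt B z y) \<le> Suc (card (nonopt B z (upd \<sigma> y i j)))"
proof -
  have "nonopt B z y \<subseteq> insert j (nonopt B z (upd \<sigma> y i j))"
    using sigC'[OF iC] BC' by (auto simp: nonopt_def upd_def)
  then have "card (nonopt B z y) \<le> card (insert j (nonopt B z (upd \<sigma> y i j)))"
    by (rule card_mono[rotated]) (use finB in \<open>auto simp: nonopt_def\<close>)
  also have "\<dots> \<le> Suc (card (nonopt B z (upd \<sigma> y i j)))" by (rule card_insert_le_m1) (use finB in \<open>auto simp: nonopt_def\<close>)
  finally show ?thesis .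
qed

lemma Inv_step:
  assumes I: "Inv z y" and v: "v \<in> set_pmf (elitist_step n z S Ax y)"
  shows "Inv z v"
proof (cases "W y = {}")
  case True
  then show ?thesis using I v by (auto simp: step_eq Sx_def)
next
  case False
  define i where "i = Min (W y)"
  have iW: "i \<in> W y" using False finC W_sub i_def by (metis Min_in finite_subset)
  have iC: "i \<in> C" using iW W_sub by blast
  have Bne: "B \<noteq> {}" using Bne False by blast
  have "set_pmf (S y) = upd \<sigma> y i ` B" using False Bne finB by (simp add: Sx_def i_def)
  with v obtain j where j: "j \<in> B" and vv: "v = y \<or> v = upd \<sigma> y i j"
    unfolding step_eq set_map_pmf by (auto split: if_splits)
  show ?thesis using vv
  proof
    assume "v = y" then show ?thesis using I by simp
  next
    assume v: "v = upd \<sigma> y i j"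
    have off: "\<forall>l. l \<notin> B \<union> C' \<longrightarrow> y l = x l" using I by (simp add: Inv_def)
    have Wv: "W v = W y - {i}" using W_upd[OF off iW j] v by simp
    have cW: "card (W y) = Suc (card (W v))" using Wv iW finC W_sub
      by (metis card_Suc_Diff1 finite_subset)
    have "card (nonopt B z y) \<le> Suc (card (nonopt B z v))" using nonopt_upd[OF iC j] v by simp
    moreover have "k + card (W y) \<le> card (nonopt B z y) + card C" using I by (simp add: Inv_def)
    ultimately have "k + card (W v) \<le> card (nonopt B z v) + card C" using cW by linarith
    moreover have "\<forall>l. l \<notin> B \<union> C' \<longrightarrow> v l = x l" using off upd_off[OF iC j] v by simp
    ultimately show ?thesis by (simp add: Inv_def)
  qed
qed

lemma Inv_run: "Inv z x \<Longrightarrow> v \<in> set_pmf (elitist_run n z S Ax t x) \<Longrightarrow> Inv z v"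
proof (induction t arbitrary: v)
  case 0 then show ?case by simp
next
  case (Suc t)
  from Suc.prems(2) obtain u where u: "u \<in> set_pmf (elitist_run n z S Ax t x)" and vu: "v \<in> set_pmf (elitist_step n z S Ax u)" by auto
  show ?case using Inv_step[OF Suc.IH[OF Suc.prems(1) u] vu] .
qed

lemma goal_iff: "Inv z v \<Longrightarrow> goal_reached tgt B C C' \<sigma> x v \<longleftrightarrow> W v = {}"
proof -
  assume I: "Inv z v"
  have off: "\<forall>j. j \<notin> B \<union> C' \<longrightarrow> v j = x j" using I by (simp add: Inv_def)
  have "\<forall>i\<in>C. des tgt \<sigma> v i = (case tgt of None \<Rightarrow> x i | Some w \<Rightarrow> w (\<sigma> i))"
    using des_eq[OF off] by (simp add: des_def)
  then show ?thesis using off unfolding goal_reached_def Wr_def by auto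
qed


definition fr :: "(nat\<Rightarrow>bool) \<Rightarrow> real" where
  "fr y = (if W y = {} then 0 else 2 ^ card (W y))"

lemma fr_nonneg: "fr y \<ge> 0" by (simp add: fr_def)

lemma beta_le: "C \<noteq> {} \<Longrightarrow> \<beta> \<le> 1"
proof -
  assume "C \<noteq> {}"
  then have "card C \<ge> 1" using finC by (simp add: Suc_le_eq card_gt_0_iff)
  then have "card B > 0" using Cb bpos by (cases "card B = 0") auto
  moreover have "\<beta> * card B \<le> card B" using kb kB by linarith
  ultimately show ?thesis by simp
qed

lemma one_step:
  assumes I: "Inv z y"
  shows "(\<integral>\<^sup>+v. ennreal (fr v) \<partial>measure_pmf (elitist_step n z S Ax y)) \<le> ennreal ((1 - \<beta>/4) * fr y)"
proof (cases "W y = {}")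
  case True
  then show ?thesis by (simp add: step_eq Sx_def fr_def)
next
  case False
  define i where "i = Min (W y)"
  have iW: "i \<in> W y" using False finC W_sub i_def by (metis Min_in finite_subset)
  have iC: "i \<in> C" using iW W_sub by blast
  have Bne: "B \<noteq> {}" using Bne False by blast
  have off: "\<forall>l. l \<notin> B \<union> C' \<longrightarrow> y l = x l" using I by (simp add: Inv_def)
  define w where "w = card (W y)"
  have w1: "w \<ge> 1" using False finC W_sub w_def by (metis One_nat_def Suc_le_eq card_gt_0_iff finite_subset)
  have fry: "fr y = 2 ^ w" using False by (simp add: fr_def w_def)
  define h where "h j = (if OM n z y \<le> OM n z (upd \<sigma> y i j) then upd \<sigma> y i j else y)" for j
  have step: "elitist_step n z S Ax y = map_pmf h (pmf_of_set B)"
    using False unfolding step_eq Sx_def h_def[abs_def] i_def by (simp add: map_pmf_comp)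
  define Nn where "Nn = nonopt B z y"
  have NnB: "Nn \<subseteq> B" by (auto simp: Nn_def nonopt_def)
  have fupd: "fr (upd \<sigma> y i j) \<le> 2 ^ w / 2" if j: "j \<in> B" for j
  proof -
    have "W (upd \<sigma> y i j) = W y - {i}" using W_upd[OF off iW j] .
    then have "card (W (upd \<sigma> y i j)) = w - 1" using iW w_def by simp
    moreover have "(2::real) ^ (w - 1) = 2 ^ w / 2" using w1 by (cases w) auto
    ultimately show ?thesis by (simp add: fr_def)
  qed
  define hb where "hb j = (if j \<in> Nn then (2::real) ^ w / 2 else 2 ^ w)" for j
  have hle: "fr (h j) \<le> hb j" if j: "j \<in> B" for j
  proof (cases "j \<in> Nn")
    case True
    then have "y j \<noteq> z j" by (simp add: Nn_def nonopt_def)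
    then have "h j = upd \<sigma> y i j" using OM_upd[OF iC j] by (simp add: h_def)
    then show ?thesis using fupd[OF j] True by (simp add: hb_def)
  next
    case False
    have "fr (h j) \<le> 2 ^ w" using fupd[OF j] fry fr_nonneg[of "upd \<sigma> y i j"] by (auto simp: h_def)
    then show ?thesis using False by (simp add: hb_def)
  qed
  have sumhb: "(\<Sum>j\<in>B. hb j) = card B * 2 ^ w - card Nn * 2 ^ w / 2"
  proof -
    have "(\<Sum>j\<in>B. hb j) = (\<Sum>j\<in>B. 2 ^ w - (if j \<in> Nn then (2::real) ^ w / 2 else 0))"
      by (rule sum.cong) (auto simp: hb_def)
    also have "\<dots> = card B * 2 ^ w - card Nn * 2 ^ w / 2"
      using NnB finB by (simp add: sum_subtractf sum.If_cases Int_absorb1)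
    finally show ?thesis .
  qed
  have cNn: "real (card Nn) \<ge> \<beta> * card B / 2"
  proof -
    have "k + w \<le> card Nn + card C" using I by (simp add: Inv_def Nn_def w_def)
    then have "real k + 1 \<le> card Nn + card C" using w1 by linarith
    then show ?thesis using kb Cb by linarith
  qed
  have cB: "real (card B) > 0" using Bne finB by (simp add: card_gt_0_iff)
  have "(\<integral>\<^sup>+v. ennreal (fr v) \<partial>measure_pmf (elitist_step n z S Ax y))
        = (\<integral>\<^sup>+j. ennreal (fr (h j)) \<partial>measure_pmf (pmf_of_set B))" by (simp add: step)
  also have "\<dots> = ennreal (\<integral>j. fr (h j) \<partial>measure_pmf (pmf_of_set B))"
    by (rule nn_integral_eq_integral) (use finB Bne fr_nonneg in \<open>auto intro!: integrable_measure_pmf_finite simp: set_pmf_of_set[OF Bne finB]\<close>)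
  also have "(\<integral>j. fr (h j) \<partial>measure_pmf (pmf_of_set B)) = (\<Sum>j\<in>B. fr (h j)) / card B"
    using finB Bne by (simp add: integral_pmf_of_set)
  also have "\<dots> \<le> (\<Sum>j\<in>B. hb j) / card B"
    using cB by (intro divide_right_mono sum_mono hle) auto
  also have "\<dots> \<le> (1 - \<beta>/4) * fr y"
  proof -
    have "card B * 2 ^ w - card Nn * 2 ^ w / 2 \<le> (1 - \<beta>/4) * 2 ^ w * card B"
    proof -
      have "(card Nn) * (2::real) ^ w / 2 \<ge> (\<beta> * card B / 2) * 2 ^ w / 2"
        using cNn by (intro divide_right_mono mult_right_mono) auto
      then show ?thesis by (simp add: algebra_simps)
    qed
    then have "(\<Sum>j\<in>B. hb j) \<le> ((1 - \<beta>/4) * fr y) * card B" using sumhb fry by simp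
    then show ?thesis using cB by (simp add: pos_divide_le_eq)
  qed
  finally show ?thesis by (simp add: ennreal_leI)
qed


lemma fr_zero: "C = {} \<Longrightarrow> fr y = 0"
proof -
  assume "C = {}" then have "W y = {}" using W_sub[of y] by blast
  then show "fr y = 0" unfolding fr_def by simp
qed

lemma run_exp:
  assumes I: "Inv z x"
  shows "(\<integral>\<^sup>+v. ennreal (fr v) \<partial>measure_pmf (elitist_run n z S Ax t x)) \<le> ennreal ((1 - \<beta>/4) ^ t * fr x)"
proof (cases "C = {}")
  case True
  show ?thesis unfolding fr_zero[OF True] by simp
next
  case False
  then have rho: "1 - \<beta>/4 \<ge> 0" using beta_le by simp
  show ?thesis
  proof (induction t)
    case 0 then show ?case by simp
  next
    case (Suc t)
    have "(\<integral>\<^sup>+v. ennreal (fr v) \<partial>measure_pmf (elitist_run n z S Ax (Suc t) x))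
        = (\<integral>\<^sup>+u. (\<integral>\<^sup>+v. ennreal (fr v) \<partial>measure_pmf (elitist_step n z S Ax u)) \<partial>measure_pmf (elitist_run n z S Ax t x))"
      by simp
    also have "\<dots> \<le> (\<integral>\<^sup>+u. ennreal (1 - \<beta>/4) * ennreal (fr u) \<partial>measure_pmf (elitist_run n z S Ax t x))"
    proof (rule nn_integral_mono_AE, rule AE_pmfI)
      fix u assume "u \<in> set_pmf (elitist_run n z S Ax t x)"
      then have "Inv z u" using Inv_run[OF I] by blast
      then show "(\<integral>\<^sup>+v. ennreal (fr v) \<partial>measure_pmf (elitist_step n z S Ax u)) \<le> ennreal (1 - \<beta>/4) * ennreal (fr u)"
        using one_step[OF \<open>Inv z u\<close>] ennreal_mult[OF rho fr_nonneg[of u]] by simp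
    qed
    also have "\<dots> = ennreal (1 - \<beta>/4) * (\<integral>\<^sup>+u. ennreal (fr u) \<partial>measure_pmf (elitist_run n z S Ax t x))"
      by (rule nn_integral_cmult) simp
    also have "\<dots> \<le> ennreal (1 - \<beta>/4) * ennreal ((1 - \<beta>/4) ^ t * fr x)"
      by (rule mult_left_mono[OF Suc]) simp
    also have "\<dots> = ennreal ((1 - \<beta>/4) ^ Suc t * fr x)"
      using rho fr_nonneg by (simp add: ennreal_mult[symmetric] mult.assoc)
    finally show ?case .
  qed
qed

lemma prob_bad:
  assumes I: "Inv z x"
  shows "measure_pmf.prob (elitist_run n z S Ax t x) {v. \<not> goal_reached tgt B C C' \<sigma> x v} \<le> (1 - \<beta>/4) ^ t * fr x"
proof -
  let ?p = "elitist_run n z S Ax t x" and ?A = "{v. \<not> goal_reached tgt B C C' \<sigma> x v}"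
  have "emeasure (measure_pmf ?p) ?A = (\<integral>\<^sup>+v. indicator ?A v \<partial>measure_pmf ?p)" by simp
  also have "\<dots> \<le> (\<integral>\<^sup>+v. ennreal (fr v) \<partial>measure_pmf ?p)"
  proof (rule nn_integral_mono_AE, rule AE_pmfI)
    fix v assume "v \<in> set_pmf ?p"
    then have Iv: "Inv z v" using Inv_run[OF I] by blast
    show "indicator ?A v \<le> ennreal (fr v)"
    proof (cases "v \<in> ?A")
      case True
      then have "W v \<noteq> {}" using goal_iff[OF Iv] by simp
      then have "fr v \<ge> 1" by (simp add: fr_def)
      then show ?thesis using True by simp
    qed simp
  qed
  also have "\<dots> \<le> ennreal ((1 - \<beta>/4) ^ t * fr x)" by (rule run_exp[OF I])
  finally have le: "ennreal (measure_pmf.prob ?p ?A) \<le> ennreal ((1 - \<beta>/4) ^ t * fr x)"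
    by (simp add: measure_pmf.emeasure_eq_measure)
  have nn: "0 \<le> (1 - \<beta>/4) ^ t * fr x"
  proof (cases "C = {}")
    case True then show ?thesis unfolding fr_zero[OF True] by simp
  next
    case False then have "1 - \<beta>/4 \<ge> 0" using beta_le by simp
    then show ?thesis using fr_nonneg by simp
  qed
  show ?thesis using le nn by simp
qed

end


locale cpp = cp + fixes \<pi> :: "nat \<Rightarrow> nat" assumes perm: "\<pi> permutes B"
begin

definition Tp :: "(nat\<Rightarrow>bool) \<Rightarrow> nat \<Rightarrow> bool" where
  "Tp y i = (if i \<in> B then (x i \<noteq> (y (inv \<pi> i) \<noteq> x (inv \<pi> i))) else y i)"

lemma pinv: "inv \<pi> (\<pi> b) = b" "\<pi> (inv \<pi> b) = b" using permutes_inverses[OF perm] by auto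
lemma pin: "\<pi> b \<in> B \<longleftrightarrow> b \<in> B" using permutes_in_image[OF perm] .
lemma pinj: "inj \<pi>" using permutes_inj[OF perm] .

lemma Tp_pi: "b \<in> B \<Longrightarrow> Tp y (\<pi> b) = (x (\<pi> b) \<noteq> (y b \<noteq> x b))"
  by (simp add: Tp_def pin pinv)
lemma Tp_off: "i \<notin> B \<Longrightarrow> Tp y i = y i" by (simp add: Tp_def)
lemma Tp_x: "Tp x = x" by (auto simp: Tp_def fun_eq_iff)

lemma image_pi_eq: "(\<And>b. P (\<pi> b) \<longleftrightarrow> Q b) \<Longrightarrow> {i. P i} = \<pi> ` {b. Q b}"
proof (rule set_eqI)
  fix i assume h: "\<And>b. P (\<pi> b) \<longleftrightarrow> Q b"
  have "i = \<pi> (inv \<pi> i)" using pinv by simp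
  then show "i \<in> {i. P i} \<longleftrightarrow> i \<in> \<pi> ` {b. Q b}" using h by (metis image_iff mem_Collect_eq)
qed

lemma agree_T:
  assumes N: "N \<subseteq> B"
  shows "Tp y (\<pi> b) = target_of x B (\<pi> ` N) z0 (\<pi> b) \<longleftrightarrow> y b = target_of x B N z0 b"
proof (cases "b \<in> B")
  case True
  have "\<pi> b \<in> \<pi> ` N \<longleftrightarrow> b \<in> N" using pinj by (simp add: inj_image_mem_iff)
  then show ?thesis using True pin[of b] by (auto simp: Tp_pi target_of_def)
next
  case False
  then have "\<pi> b = b" using permutes_not_in[OF perm] by blast
  moreover have "b \<notin> \<pi> ` N" "b \<notin> N" using False N permutes_image[OF perm] by auto
  ultimately show ?thesis using False by (simp add: Tp_off target_of_def)
qed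

lemma pin_n: "\<pi> b < n \<longleftrightarrow> b < n"
  using pin[of b] Bn permutes_not_in[OF perm, of b] by (cases "b \<in> B") auto

lemma OM_T:
  assumes N: "N \<subseteq> B"
  shows "OM n (target_of x B (\<pi> ` N) z0) (Tp y) = OM n (target_of x B N z0) y"
proof -
  have "{i. i < n \<and> Tp y i = target_of x B (\<pi> ` N) z0 i} = \<pi> ` {b. b < n \<and> y b = target_of x B N z0 b}"
    by (rule image_pi_eq) (simp add: agree_T[OF N] pin_n)
  then show ?thesis unfolding OM_def using pinj by (simp add: card_image inj_on_subset)
qed

lemma nonopt_T:
  assumes N: "N \<subseteq> B"
  shows "nonopt B (target_of x B (\<pi> ` N) z0) (Tp y) = \<pi> ` nonopt B (target_of x B N z0) y"
proof -
  have "{i. i \<in> B \<and> Tp y i \<noteq> target_of x B (\<pi> ` N) z0 i} = \<pi> ` {b. b \<in> B \<and> y b \<noteq> target_of x B N z0 b}"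
    by (rule image_pi_eq) (simp add: agree_T[OF N] pin)
  then show ?thesis unfolding nonopt_def by simp
qed

lemma goal_T: "goal_reached tgt B C C' \<sigma> x (Tp y) = goal_reached tgt B C C' \<sigma> x y"
proof -
  have a: "\<forall>i\<in>C. Tp y (\<sigma> i) = y (\<sigma> i)" using sigC' BC' Tp_off by blast
  have b: "\<forall>j. j \<notin> B \<union> C' \<longrightarrow> Tp y j = y j" using Tp_off by blast
  show ?thesis unfolding goal_reached_def using a b by auto
qed

lemma W_T: "W (Tp y) = W y"
proof -
  have "des tgt \<sigma> (Tp y) i = des tgt \<sigma> y i" if "i \<in> C" for i
  proof -
    have "Tp y i = y i" using that BC Tp_off by blast
    then show ?thesis by (simp add: des_def split: option.splits)
  qed
  moreover have "\<forall>i\<in>C. Tp y (\<sigma> i) = y (\<sigma> i)" using sigC' BC' Tp_off by blast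
  ultimately show ?thesis by (auto simp: Wr_def)
qed

lemma upd_T:
  assumes iC: "i \<in> C" and j: "j \<in> B"
  shows "Tp (upd \<sigma> y i j) = upd \<sigma> (Tp y) i (\<pi> j)"
proof
  fix l
  have si: "\<sigma> i \<notin> B" using sigC'[OF iC] BC' by blast
  show "Tp (upd \<sigma> y i j) l = upd \<sigma> (Tp y) i (\<pi> j) l"
  proof (cases "l \<in> B")
    case True
    define b where "b = inv \<pi> l"
    have l: "l = \<pi> b" and b: "b \<in> B" using True pin pinv by (auto simp: b_def) (metis pinv(2) pin)
    have "b \<noteq> \<sigma> i" using b si by blast
    moreover have "(\<pi> b = \<pi> j) = (b = j)" using pinj by (simp add: inj_eq)
    moreover have "\<pi> b \<noteq> \<sigma> i" using pin b si by metis
    ultimately show ?thesis using b j unfolding l by (auto simp: upd_def Tp_pi)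
  next
    case False
    have "\<pi> j \<in> B" using j pin by simp
    then show ?thesis using False j si by (auto simp: upd_def Tp_off)
  qed
qed

lemma S_T: "S (Tp y) = map_pmf Tp (S y)"
proof (cases "W y = {}")
  case True then show ?thesis by (simp add: Sx_def W_T)
next
  case False
  define i where "i = Min (W y)"
  have iC: "i \<in> C" using False finC W_sub i_def by (metis Min_in finite_subset subsetD)
  have Bne: "B \<noteq> {}" using Bne False by blast
  have "map_pmf Tp (S y) = map_pmf (\<lambda>j. Tp (upd \<sigma> y i j)) (pmf_of_set B)"
    using False by (simp add: Sx_def i_def map_pmf_comp)
  also have "\<dots> = map_pmf (\<lambda>j. upd \<sigma> (Tp y) i (\<pi> j)) (pmf_of_set B)"
    by (rule map_pmf_cong) (use Bne finB upd_T[OF iC] in auto)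
  also have "\<dots> = map_pmf (upd \<sigma> (Tp y) i) (map_pmf \<pi> (pmf_of_set B))" by (simp add: map_pmf_comp)
  also have "map_pmf \<pi> (pmf_of_set B) = pmf_of_set B"
    using map_pmf_of_set_inj[OF permutes_inj_on[OF perm] Bne finB] permutes_image[OF perm] by simp
  finally show ?thesis using False by (simp add: Sx_def W_T i_def)
qed

lemma step_T:
  assumes N: "N \<subseteq> B"
  shows "elitist_step n (target_of x B (\<pi> ` N) z0) S Ax (Tp y) = map_pmf Tp (elitist_step n (target_of x B N z0) S Ax y)"
  unfolding step_eq S_T by (simp add: map_pmf_comp OM_T[OF N] if_distrib[of Tp])

lemma run_T:
  assumes N: "N \<subseteq> B"
  shows "elitist_run n (target_of x B (\<pi> ` N) z0) S Ax t x = map_pmf Tp (elitist_run n (target_of x B N z0) S Ax t x)"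
proof (induction t)
  case 0 then show ?case by (simp add: Tp_x)
next
  case (Suc t)
  show ?case by (simp add: Suc bind_map_pmf map_bind_pmf step_T[OF N])
qed

end


context cp begin

definition K where "K = {N. N \<subseteq> B \<and> card N = k}"

lemma finK: "finite K"
proof -
  have "K \<subseteq> Pow B" by (auto simp: K_def)
  then show ?thesis using finB finite_subset by blast
qed
lemma Kne: "K \<noteq> {}"
proof -
  obtain N where "N \<subseteq> B" "card N = k" using obtain_subset_with_card_n[OF kB] by blast
  then show ?thesis by (auto simp: K_def)
qed
lemma setK: "set_pmf (pmf_of_set K) = K" using finK Kne by simp

lemma nonopt_target: "N \<subseteq> B \<Longrightarrow> nonopt B (target_of x B N z0) x = N"
  by (auto simp: nonopt_def target_of_def)

lemma Inv_init: "N \<in> K \<Longrightarrow> Inv (target_of x B N z0) x"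
  using nonopt_target[of N] W_sub[of x] finC card_mono[OF finC W_sub[of x]]
  by (auto simp: Inv_def K_def)

lemma bound_nn: "0 \<le> (1 - \<beta>/4) ^ t * fr x"
proof (cases "C = {}")
  case True then show ?thesis unfolding fr_zero[OF True] by simp
next
  case False then have "1 - \<beta>/4 \<ge> 0" using beta_le by simp
  then show ?thesis using fr_nonneg by simp
qed

lemma joint_alt: "joint n S Ax B k x z0 t = bind_pmf (pmf_of_set K)
   (\<lambda>N. map_pmf (\<lambda>v. (target_of x B N z0, v)) (elitist_run n (target_of x B N z0) S Ax t x))"
  by (simp add: joint_def K_def)

lemma joint_bad:
  "measure_pmf.prob (joint n S Ax B k x z0 t) {p. \<not> goal_reached tgt B C C' \<sigma> x (snd p)} \<le> (1 - \<beta>/4) ^ t * fr x"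
proof -
  let ?A = "{p. \<not> goal_reached tgt B C C' \<sigma> x (snd p)}"
  have "emeasure (measure_pmf (joint n S Ax B k x z0 t)) ?A
      = (\<integral>\<^sup>+N. emeasure (measure_pmf (elitist_run n (target_of x B N z0) S Ax t x)) {v. \<not> goal_reached tgt B C C' \<sigma> x v} \<partial>measure_pmf (pmf_of_set K))"
    unfolding joint_alt by (simp add: vimage_def)
  also have "\<dots> \<le> (\<integral>\<^sup>+N. ennreal ((1 - \<beta>/4) ^ t * fr x) \<partial>measure_pmf (pmf_of_set K))"
  proof (rule nn_integral_mono_AE, rule AE_pmfI)
    fix N assume "N \<in> set_pmf (pmf_of_set K)"
    then have "Inv (target_of x B N z0) x" using Inv_init setK by simp
    from prob_bad[OF this, of t]
    show "emeasure (measure_pmf (elitist_run n (target_of x B N z0) S Ax t x)) {v. \<not> goal_reached tgt B C C' \<sigma> x v}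
        \<le> ennreal ((1 - \<beta>/4) ^ t * fr x)"
      by (simp add: measure_pmf.emeasure_eq_measure ennreal_leI)
  qed
  also have "\<dots> = ennreal ((1 - \<beta>/4) ^ t * fr x)" by simp
  finally show ?thesis using bound_nn[of t] by (simp add: measure_pmf.emeasure_eq_measure)
qed

lemma joint_support:
  assumes p: "p \<in> set_pmf (joint n S Ax B k x z0 t)" and g: "goal_reached tgt B C C' \<sigma> x (snd p)"
  shows "real (card (nonopt B (fst p) (snd p))) \<ge> \<beta> * real (card B) - real (card C)"
proof -
  from p obtain N v where N: "N \<in> K" and v: "v \<in> set_pmf (elitist_run n (target_of x B N z0) S Ax t x)"
    and pe: "p = (target_of x B N z0, v)"
    unfolding joint_alt using setK by auto
  have I: "Inv (target_of x B N z0) v" using Inv_run[OF Inv_init[OF N] v] .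
  then have "W v = {}" using goal_iff g pe by simp
  then have "k \<le> card (nonopt B (target_of x B N z0) v) + card C" using I by (simp add: Inv_def)
  then show ?thesis using kb pe by simp
qed

end

context cpp begin

lemma joint_sym:
  "measure_pmf.prob (joint n S Ax B k x z0 t) {p. goal_reached tgt B C C' \<sigma> x (snd p) \<and> nonopt B (fst p) (snd p) = D}
 = measure_pmf.prob (joint n S Ax B k x z0 t) {p. goal_reached tgt B C C' \<sigma> x (snd p) \<and> nonopt B (fst p) (snd p) = \<pi> ` D}"
proof -
  let ?R = "\<lambda>N. elitist_run n (target_of x B N z0) S Ax t x"
  let ?G = "\<lambda>D N. emeasure (measure_pmf (?R N)) {v. goal_reached tgt B C C' \<sigma> x v \<and> nonopt B (target_of x B N z0) v = D}"
  have inj: "inj_on ((`) \<pi>) K" using pinj by (auto simp: inj_on_def inj_image_eq_iff)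
  have imK: "(`) \<pi> ` K = K"
  proof -
    have "\<pi> ` N \<in> K" if "N \<in> K" for N
      using that permutes_image[OF perm] pinj by (auto simp: K_def card_image inj_on_subset)
    moreover have "N \<in> (`) \<pi> ` K" if "N \<in> K" for N
    proof -
      have "inv \<pi> ` N \<in> K" using that permutes_image[OF permutes_inv[OF perm]] permutes_inj[OF permutes_inv[OF perm]]
        by (auto simp: K_def card_image inj_on_subset)
      moreover have "\<pi> ` (inv \<pi> ` N) = N" using pinv by (auto simp: image_comp image_iff)
      ultimately show ?thesis by (metis image_eqI)
    qed
    ultimately show ?thesis by blast
  qed
  have pK: "pmf_of_set K = map_pmf ((`) \<pi>) (pmf_of_set K)"
    using map_pmf_of_set_inj[OF inj Kne finK] imK by simp
  have key: "?G (\<pi> ` D) (\<pi> ` N) = ?G D N" if N: "N \<in> K" for N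
  proof -
    have NB: "N \<subseteq> B" using N by (simp add: K_def)
    have "?G (\<pi> ` D) (\<pi> ` N) = emeasure (measure_pmf (?R N))
        {v. goal_reached tgt B C C' \<sigma> x (Tp v) \<and> nonopt B (target_of x B (\<pi> ` N) z0) (Tp v) = \<pi> ` D}"
      unfolding run_T[OF NB] by (simp add: vimage_def)
    also have "\<dots> = ?G D N"
      using goal_T nonopt_T[OF NB] pinj by (simp add: inj_image_eq_iff)
    finally show ?thesis .
  qed
  have "emeasure (measure_pmf (joint n S Ax B k x z0 t)) {p. goal_reached tgt B C C' \<sigma> x (snd p) \<and> nonopt B (fst p) (snd p) = \<pi> ` D}
      = (\<integral>\<^sup>+N. ?G (\<pi> ` D) N \<partial>measure_pmf (pmf_of_set K))"
    unfolding joint_alt by (simp add: vimage_def)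
  also have "\<dots> = (\<integral>\<^sup>+N. ?G (\<pi> ` D) (\<pi> ` N) \<partial>measure_pmf (pmf_of_set K))"
    by (subst pK) simp
  also have "\<dots> = (\<integral>\<^sup>+N. ?G D N \<partial>measure_pmf (pmf_of_set K))"
    by (rule nn_integral_cong_AE, rule AE_pmfI) (simp add: key setK)
  also have "\<dots> = emeasure (measure_pmf (joint n S Ax B k x z0 t)) {p. goal_reached tgt B C C' \<sigma> x (snd p) \<and> nonopt B (fst p) (snd p) = D}"
    unfolding joint_alt by (simp add: vimage_def)
  finally show ?thesis by (simp add: measure_pmf.emeasure_eq_measure)
qed

end


lemma final_ineq:
  fixes n m t :: nat and c \<beta> F :: real
  assumes n: "n \<ge> 2" and c: "c \<ge> 8" and b: "0 < \<beta>" "\<beta> \<le> 1" and m: "m \<ge> 1"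
    and t: "real t \<ge> c * real m * ln (real n) / \<beta>" and F: "0 \<le> F" "F \<le> 2 ^ m"
  shows "(1 - \<beta>/4) ^ t * F \<le> real n powr (- (1/8) * c)"
proof -
  define L where "L = ln (real n)"
  have L2: "ln 2 \<le> L" using n unfolding L_def by simp
  have ln2: "0 < ln (2::real)" by simp
  have q: "ln 2 \<le> c * L / 8"
  proof -
    have "1 * L \<le> (c/8) * L" by (intro mult_right_mono) (use L2 ln2 c in linarith)+
    then show ?thesis using L2 by simp
  qed
  have m1: "real m * ln 2 \<le> real m * (c * L / 8)" using q by (intro mult_left_mono) auto
  have m2: "c * L / 8 \<le> real m * (c * L / 8)" using m q ln2
    by (metis dual_order.trans less_imp_le mult_1 mult_right_mono of_nat_1 of_nat_mono)
  have key: "real m * ln 2 - c * real m * L / 4 \<le> - (c * L / 8)" using m1 m2 by (simp add: algebra_simps)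
  have bt: "\<beta> * real t \<ge> c * real m * L" using t b unfolding L_def by (simp add: divide_le_eq mult.commute)
  have r0: "0 \<le> 1 - \<beta>/4" using b by simp
  have "(1 - \<beta>/4) ^ t \<le> exp (- \<beta>/4) ^ t"
    using r0 exp_ge_add_one_self[of "-\<beta>/4"] by (intro power_mono) auto
  also have "\<dots> = exp (- (\<beta> * real t) / 4)" by (simp add: exp_of_nat_mult[symmetric] algebra_simps)
  also have "\<dots> \<le> exp (- (c * real m * L) / 4)" using bt by simp
  finally have e1: "(1 - \<beta>/4) ^ t \<le> exp (- (c * real m * L) / 4)" .
  have e2: "F \<le> exp (real m * ln 2)" using F by (simp add: exp_of_nat_mult)
  have "(1 - \<beta>/4) ^ t * F \<le> exp (- (c * real m * L) / 4) * exp (real m * ln 2)"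
    using e1 e2 F r0 by (intro mult_mono) auto
  also have "\<dots> = exp (real m * ln 2 - c * real m * L / 4)" by (simp add: exp_add[symmetric])
  also have "\<dots> \<le> exp (- (c * L / 8))" using key by simp
  also have "\<dots> = real n powr (- (1/8) * c)" using n unfolding L_def powr_def by (simp add: algebra_simps)
  finally show ?thesis .
qed

theorem lemma2:
  "\<exists>\<kappa>::real. \<kappa> > 0 \<and> (\<exists>(c0::real) (n0::nat). \<forall>n \<ge> n0.
     \<forall>(B::nat set) (C::nat set) (C'::nat set) (\<sigma>::nat \<Rightarrow> nat) (\<beta>::real) (tgt::(nat \<Rightarrow> bool) option).
       B \<subseteq> {..<n} \<and> C \<subseteq> {..<n} \<and> C' \<subseteq> {..<n} \<and>
       B \<inter> C = {} \<and> B \<inter> C' = {} \<and> C \<inter> C' = {} \<and>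
       card C = card C' \<and> bij_betw \<sigma> C C' \<and> strict_mono_on C \<sigma> \<and>
       \<beta> > 0 \<and> real (card C) \<le> \<beta> * real (card B) / 2 \<longrightarrow>
       (\<exists>S A. \<forall>(x::nat \<Rightarrow> bool) (z0::nat \<Rightarrow> bool) (k::nat) (c::real).
          real k \<ge> \<beta> * real (card B) \<and> k \<le> card B \<and> c \<ge> c0 \<longrightarrow>
          (\<forall>t::nat. real t \<ge> c * real (card C) * ln (real n) / \<beta> \<longrightarrow>
             measure_pmf.prob (joint n S A B k x z0 t)
               {p. \<not> goal_reached tgt B C C' \<sigma> x (snd p)} \<le> real n powr (- \<kappa> * c)) \<and>
          (\<forall>t::nat. \<forall>p \<in> set_pmf (joint n S A B k x z0 t).
             goal_reached tgt B C C' \<sigma> x (snd p) \<longrightarrow>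
             real (card (nonopt B (fst p) (snd p))) \<ge> \<beta> * real (card B) - real (card C)) \<and>
          (\<forall>(t::nat) \<pi> D. \<pi> permutes B \<longrightarrow>
             measure_pmf.prob (joint n S A B k x z0 t)
               {p. goal_reached tgt B C C' \<sigma> x (snd p) \<and> nonopt B (fst p) (snd p) = D} =
             measure_pmf.prob (joint n S A B k x z0 t)
               {p. goal_reached tgt B C C' \<sigma> x (snd p) \<and> nonopt B (fst p) (snd p) = \<pi> ` D})))"
proof (rule exI[of _ "1/8::real"], rule conjI[OF _ exI[of _ "8::real"]], simp, rule exI[of _ "2::nat"], intro allI impI)
  fix n :: nat and B C C' :: "nat set" and \<sigma> :: "nat \<Rightarrow> nat" and \<beta> :: real and tgt :: "(nat \<Rightarrow> bool) option"
  assume n: "2 \<le> n"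
  assume H: "B \<subseteq> {..<n} \<and> C \<subseteq> {..<n} \<and> C' \<subseteq> {..<n} \<and>
       B \<inter> C = {} \<and> B \<inter> C' = {} \<and> C \<inter> C' = {} \<and>
       card C = card C' \<and> bij_betw \<sigma> C C' \<and> strict_mono_on C \<sigma> \<and>
       \<beta> > 0 \<and> real (card C) \<le> \<beta> * real (card B) / 2"
  show "\<exists>S A. \<forall>(x::nat \<Rightarrow> bool) (z0::nat \<Rightarrow> bool) (k::nat) (c::real).
          real k \<ge> \<beta> * real (card B) \<and> k \<le> card B \<and> c \<ge> 8 \<longrightarrow>
          (\<forall>t::nat. real t \<ge> c * real (card C) * ln (real n) / \<beta> \<longrightarrow>
             measure_pmf.prob (joint n S A B k x z0 t)
               {p. \<not> goal_reached tgt B C C' \<sigma> x (snd p)} \<le> real n powr (- (1/8) * c)) \<and>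
          (\<forall>t::nat. \<forall>p \<in> set_pmf (joint n S A B k x z0 t).
             goal_reached tgt B C C' \<sigma> x (snd p) \<longrightarrow>
             real (card (nonopt B (fst p) (snd p))) \<ge> \<beta> * real (card B) - real (card C)) \<and>
          (\<forall>(t::nat) \<pi> D. \<pi> permutes B \<longrightarrow>
             measure_pmf.prob (joint n S A B k x z0 t)
               {p. goal_reached tgt B C C' \<sigma> x (snd p) \<and> nonopt B (fst p) (snd p) = D} =
             measure_pmf.prob (joint n S A B k x z0 t)
               {p. goal_reached tgt B C C' \<sigma> x (snd p) \<and> nonopt B (fst p) (snd p) = \<pi> ` D})"
  proof (intro exI[of _ "Sx B C \<sigma> tgt"] exI[of _ Ax] allI impI conjI ballI)
    fix x z0 :: "nat \<Rightarrow> bool" and k :: nat and c :: real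
    assume K: "\<beta> * real (card B) \<le> real k \<and> k \<le> card B \<and> 8 \<le> c"
    interpret cp n B C C' \<sigma> tgt \<beta> x k
      using H K by unfold_locales auto
    {
      fix t :: nat assume t: "c * real (card C) * ln (real n) / \<beta> \<le> real t"
      have "measure_pmf.prob (joint n S Ax B k x z0 t) {p. \<not> goal_reached tgt B C C' \<sigma> x (snd p)}
          \<le> (1 - \<beta>/4) ^ t * fr x" by (rule joint_bad)
      also have "\<dots> \<le> real n powr (- (1/8) * c)"
      proof (cases "fr x = 0")
        case True then show ?thesis by simp
      next
        case False
        then have Cne: "C \<noteq> {}" using fr_zero by blast
        then have m: "card C \<ge> 1" using finC by (simp add: Suc_le_eq card_gt_0_iff)
        have "fr x \<le> 2 ^ card C"
          using card_mono[OF finC W_sub[of x]] by (simp add: fr_def power_increasing)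
        then show ?thesis using final_ineq[OF n _ bpos beta_le[OF Cne] m t] K fr_nonneg[of x] by simp
      qed
      finally show "measure_pmf.prob (joint n S Ax B k x z0 t) {p. \<not> goal_reached tgt B C C' \<sigma> x (snd p)}
          \<le> real n powr (- (1/8) * c)" .
    }
    {
      fix t p assume "p \<in> set_pmf (joint n S Ax B k x z0 t)" "goal_reached tgt B C C' \<sigma> x (snd p)"
      then show "\<beta> * real (card B) - real (card C) \<le> real (card (nonopt B (fst p) (snd p)))"
        by (rule joint_support)
    }
    {
      fix t and \<pi> :: "nat \<Rightarrow> nat" and D assume "\<pi> permutes B"
      then interpret cpp n B C C' \<sigma> tgt \<beta> x k \<pi> by unfold_locales
      show "measure_pmf.prob (joint n S Ax B k x z0 t) {p. goal_reached tgt B C C' \<sigma> x (snd p) \<and> nonopt B (fst p) (snd p) = D}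
          = measure_pmf.prob (joint n S Ax B k x z0 t) {p. goal_reached tgt B C C' \<sigma> x (snd p) \<and> nonopt B (fst p) (snd p) = \<pi> ` D}"
        by (rule joint_sym)
    }
  qed
qed


end
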